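(* Let $G$ be a finite group, $\varphi,\psi\in\mathrm{Aut}(G)$, and $U,V\leq G\times G$ with $\Delta(G,\varphi)\leq U$ and $\Delta(G,\psi)\leq V$. Then (i) $k_2(U)=\varphi(k_1(U))$; (ii) $k_1(U\ast V)=k_1(U)\,\varphi^{-1}(k_1(V))$; (iii) $k_2(U\ast V)=k_2(V)\,\psi(k_2(U))$.
   Context: $\Delta(G,\varphi)=\{(g,\varphi(g)):g\in G\}$. For $W\leq G\times G$: $p_1(W)=\{g:\exists h,(g,h)\in W\}$, $p_2(W)=\{h:\exists g,(g,h)\in W\}$, $k_1(W)=\{g:(g,1)\in W\}$, $k_2(W)=\{h:(1,h)\in W\}$. The $\ast$-product of $U,V\leq G\times G$ is $U\ast V=\{(u,v)\in p_1(U)\times p_2(V):\exists x\in p_2(U)\cap p_1(V),\ (u,x)\in U,\ (x,v)\in V\}$. *)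

theory Defs
  imports "HOL-Algebra.Algebra"
begin

definition p1 :: "('a \<times> 'b) set \<Rightarrow> 'a set" where
  "p1 W = {g. \<exists>h. (g, h) \<in> W}"
definition p2 :: "('a \<times> 'b) set \<Rightarrow> 'b set" where
  "p2 W = {h. \<exists>g. (g, h) \<in> W}"
definition k1 :: "('a, 'm) monoid_scheme \<Rightarrow> ('a \<times> 'a) set \<Rightarrow> 'a set" where
  "k1 G W = {g. (g, \<one>\<^bsub>G\<^esub>) \<in> W}"
definition k2 :: "('a, 'm) monoid_scheme \<Rightarrow> ('a \<times> 'a) set \<Rightarrow> 'a set" where
  "k2 G W = {h. (\<one>\<^bsub>G\<^esub>, h) \<in> W}"

definition Delta :: "('a, 'm) monoid_scheme \<Rightarrow> ('a \<Rightarrow> 'a) \<Rightarrow> ('a \<times> 'a) set" where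
  "Delta G \<phi> = {(g, \<phi> g) | g. g \<in> carrier G}"

definition star_prod :: "('a \<times> 'a) set \<Rightarrow> ('a \<times> 'a) set \<Rightarrow> ('a \<times> 'a) set" where
  "star_prod U V = {(u, v). u \<in> p1 U \<and> v \<in> p2 V \<and>
      (\<exists>x \<in> p2 U \<inter> p1 V. (u, x) \<in> U \<and> (x, v) \<in> V)}"

end

theory Submission
  imports Defs
begin

lemma sg_car:
  assumes "subgroup U (G \<times>\<times> G)" "(a, b) \<in> U"
  shows "a \<in> carrier G \<and> b \<in> carrier G"
  using subgroup.subset[OF assms(1)] assms(2) by auto

lemma sg_mult:
  assumes "subgroup U (G \<times>\<times> G)" "(a, b) \<in> U" "(c, d) \<in> U"
  shows "(a \<otimes>\<^bsub>G\<^esub> c, b \<otimes>\<^bsub>G\<^esub> d) \<in> U"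
  using subgroup.m_closed[OF assms(1) assms(2) assms(3)] by simp

lemma sg_inv:
  assumes "group G" "subgroup U (G \<times>\<times> G)" "(a, b) \<in> U"
  shows "(inv\<^bsub>G\<^esub> a, inv\<^bsub>G\<^esub> b) \<in> U"
proof -
  have "inv\<^bsub>G \<times>\<times> G\<^esub> (a, b) \<in> U" using subgroup.m_inv_closed[OF assms(2) assms(3)] .
  then show ?thesis using sg_car[OF assms(2,3)] inv_DirProd[OF assms(1) assms(1)] by simp
qed

lemma sg_one:
  assumes "subgroup U (G \<times>\<times> G)"
  shows "(\<one>\<^bsub>G\<^esub>, \<one>\<^bsub>G\<^esub>) \<in> U"
  using subgroup.one_closed[OF assms] by simp

theorem lemma5p4:
  fixes G :: "('a, 'm) monoid_scheme"
    and \<phi> \<psi> :: "'a \<Rightarrow> 'a"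
    and U V :: "('a \<times> 'a) set"
  assumes "group G"
    and "finite (carrier G)"
    and "\<phi> \<in> iso G G"
    and "\<psi> \<in> iso G G"
    and "subgroup U (G \<times>\<times> G)"
    and "subgroup V (G \<times>\<times> G)"
    and "Delta G \<phi> \<subseteq> U"
    and "Delta G \<psi> \<subseteq> V"
  shows "k2 G U = \<phi> ` k1 G U \<and>
    k1 G (star_prod U V) = k1 G U <#>\<^bsub>G\<^esub> (inv_into (carrier G) \<phi> ` k1 G V) \<and>
    k2 G (star_prod U V) = k2 G V <#>\<^bsub>G\<^esub> (\<psi> ` k2 G U)"
proof -
  interpret G: group G by fact
  have hp: "group_hom G G \<phi>" using assms(3) by (simp add: group_hom_def group_hom_axioms_def iso_def assms(1))
  have hs: "group_hom G G \<psi>" using assms(4) by (simp add: group_hom_def group_hom_axioms_def iso_def assms(1))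
  have bp: "bij_betw \<phi> (carrier G) (carrier G)" using assms(3) by (simp add: iso_def)
  have bs: "bij_betw \<psi> (carrier G) (carrier G)" using assms(4) by (simp add: iso_def)
  have pc: "\<phi> g \<in> carrier G" if "g \<in> carrier G" for g using bp that bij_betwE by blast
  have sc: "\<psi> g \<in> carrier G" if "g \<in> carrier G" for g using bs that bij_betwE by blast
  have pinv: "\<phi> (inv\<^bsub>G\<^esub> g) = inv\<^bsub>G\<^esub> \<phi> g" if "g \<in> carrier G" for g
    using group_hom.hom_inv[OF hp that] .
  have sinv: "\<psi> (inv\<^bsub>G\<^esub> g) = inv\<^bsub>G\<^esub> \<psi> g" if "g \<in> carrier G" for g
    using group_hom.hom_inv[OF hs that] .
  have pmul: "\<phi> (a \<otimes>\<^bsub>G\<^esub> b) = \<phi> a \<otimes>\<^bsub>G\<^esub> \<phi> b" if "a \<in> carrier G" "b \<in> carrier G" for a b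
    using group_hom.hom_mult[OF hp that] .
  define pi where "pi = inv_into (carrier G) \<phi>"
  have pic: "pi y \<in> carrier G" if "y \<in> carrier G" for y
    using that bp unfolding pi_def by (metis bij_betw_def inv_into_into)
  have ppi: "\<phi> (pi y) = y" if "y \<in> carrier G" for y
    using that bp unfolding pi_def by (metis bij_betw_def f_inv_into_f)
  have DU: "(g, \<phi> g) \<in> U" if "g \<in> carrier G" for g using assms(7) that unfolding Delta_def by blast
  have DV: "(g, \<psi> g) \<in> V" if "g \<in> carrier G" for g using assms(8) that unfolding Delta_def by blast
  note cU = sg_car[OF assms(5)] and cV = sg_car[OF assms(6)]
  note mU = sg_mult[OF assms(5)] and mV = sg_mult[OF assms(6)]
  note iU = sg_inv[OF assms(1) assms(5)] and iV = sg_inv[OF assms(1) assms(6)]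
  have oU: "(\<one>\<^bsub>G\<^esub>, \<one>\<^bsub>G\<^esub>) \<in> U" using sg_one[OF assms(5)] .
  have oV: "(\<one>\<^bsub>G\<^esub>, \<one>\<^bsub>G\<^esub>) \<in> V" using sg_one[OF assms(6)] .
  have i: "k2 G U = \<phi> ` k1 G U"
  proof
    show "k2 G U \<subseteq> \<phi> ` k1 G U"
    proof
      fix h assume "h \<in> k2 G U"
      then have h: "(\<one>\<^bsub>G\<^esub>, h) \<in> U" by (simp add: k2_def)
      then have hc: "h \<in> carrier G" using cU by blast
      have "(pi h \<otimes>\<^bsub>G\<^esub> \<one>\<^bsub>G\<^esub>, \<phi> (pi h) \<otimes>\<^bsub>G\<^esub> inv\<^bsub>G\<^esub> h) \<in> U"
        using mU[OF DU[OF pic[OF hc]] iU[OF h]] by simp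
      then have "pi h \<in> k1 G U" using pic[OF hc] ppi[OF hc] hc by (simp add: k1_def)
      then show "h \<in> \<phi> ` k1 G U" using ppi[OF hc] by force
    qed
  next
    show "\<phi> ` k1 G U \<subseteq> k2 G U"
    proof
      fix y assume "y \<in> \<phi> ` k1 G U"
      then obtain g where g: "(g, \<one>\<^bsub>G\<^esub>) \<in> U" and y: "y = \<phi> g" by (auto simp: k1_def)
      have gc: "g \<in> carrier G" using cU[OF g] by blast
      have "(inv\<^bsub>G\<^esub> g \<otimes>\<^bsub>G\<^esub> g, inv\<^bsub>G\<^esub> \<phi> g \<otimes>\<^bsub>G\<^esub> \<one>\<^bsub>G\<^esub>) \<in> U"
        using mU[OF iU[OF DU[OF gc]] g] by simp
      then have "(\<one>\<^bsub>G\<^esub>, inv\<^bsub>G\<^esub> \<phi> g) \<in> U" using gc pc[OF gc] by simp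
      from iU[OF this] have "(\<one>\<^bsub>G\<^esub>, \<phi> g) \<in> U" using pc[OF gc] by simp
      then show "y \<in> k2 G U" using y by (simp add: k2_def)
    qed
  qed
  have ii: "k1 G (star_prod U V) = k1 G U <#>\<^bsub>G\<^esub> (pi ` k1 G V)"
  proof
    show "k1 G (star_prod U V) \<subseteq> k1 G U <#>\<^bsub>G\<^esub> (pi ` k1 G V)"
    proof
      fix u assume "u \<in> k1 G (star_prod U V)"
      then obtain x where ux: "(u, x) \<in> U" and x1: "(x, \<one>\<^bsub>G\<^esub>) \<in> V"
        by (auto simp: k1_def star_prod_def)
      have uc: "u \<in> carrier G" and xc: "x \<in> carrier G" using cU[OF ux] by auto
      have "(u \<otimes>\<^bsub>G\<^esub> inv\<^bsub>G\<^esub> pi x, x \<otimes>\<^bsub>G\<^esub> inv\<^bsub>G\<^esub> \<phi> (pi x)) \<in> U"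
        using mU[OF ux iU[OF DU[OF pic[OF xc]]]] .
      then have a: "u \<otimes>\<^bsub>G\<^esub> inv\<^bsub>G\<^esub> pi x \<in> k1 G U" using ppi[OF xc] xc by (simp add: k1_def)
      have b: "pi x \<in> pi ` k1 G V" using x1 by (auto simp: k1_def)
      have "u = (u \<otimes>\<^bsub>G\<^esub> inv\<^bsub>G\<^esub> pi x) \<otimes>\<^bsub>G\<^esub> pi x"
        using uc pic[OF xc] by (simp add: G.m_assoc)
      then show "u \<in> k1 G U <#>\<^bsub>G\<^esub> (pi ` k1 G V)" using a b unfolding set_mult_def by blast
    qed
  next
    show "k1 G U <#>\<^bsub>G\<^esub> (pi ` k1 G V) \<subseteq> k1 G (star_prod U V)"
    proof
      fix u assume "u \<in> k1 G U <#>\<^bsub>G\<^esub> (pi ` k1 G V)"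
      then obtain a y where a: "(a, \<one>\<^bsub>G\<^esub>) \<in> U" and y: "(y, \<one>\<^bsub>G\<^esub>) \<in> V"
        and u: "u = a \<otimes>\<^bsub>G\<^esub> pi y" unfolding set_mult_def by (auto simp: k1_def)
      have yc: "y \<in> carrier G" using cV[OF y] by blast
      have "(a \<otimes>\<^bsub>G\<^esub> pi y, \<one>\<^bsub>G\<^esub> \<otimes>\<^bsub>G\<^esub> \<phi> (pi y)) \<in> U" using mU[OF a DU[OF pic[OF yc]]] .
      then have uy: "(u, y) \<in> U" using u ppi[OF yc] yc by simp
      show "u \<in> k1 G (star_prod U V)"
        unfolding k1_def star_prod_def p1_def p2_def using uy y oV by blast
    qed
  qed
  have iii: "k2 G (star_prod U V) = k2 G V <#>\<^bsub>G\<^esub> (\<psi> ` k2 G U)"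
  proof
    show "k2 G (star_prod U V) \<subseteq> k2 G V <#>\<^bsub>G\<^esub> (\<psi> ` k2 G U)"
    proof
      fix v assume "v \<in> k2 G (star_prod U V)"
      then obtain x where x1: "(\<one>\<^bsub>G\<^esub>, x) \<in> U" and xv: "(x, v) \<in> V"
        by (auto simp: k2_def star_prod_def)
      have vc: "v \<in> carrier G" and xc: "x \<in> carrier G" using cV[OF xv] by auto
      have "(x \<otimes>\<^bsub>G\<^esub> inv\<^bsub>G\<^esub> x, v \<otimes>\<^bsub>G\<^esub> inv\<^bsub>G\<^esub> \<psi> x) \<in> V"
        using mV[OF xv iV[OF DV[OF xc]]] .
      then have a: "v \<otimes>\<^bsub>G\<^esub> inv\<^bsub>G\<^esub> \<psi> x \<in> k2 G V" using xc by (simp add: k2_def)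
      have b: "\<psi> x \<in> \<psi> ` k2 G U" using x1 by (auto simp: k2_def)
      have "v = (v \<otimes>\<^bsub>G\<^esub> inv\<^bsub>G\<^esub> \<psi> x) \<otimes>\<^bsub>G\<^esub> \<psi> x"
        using vc sc[OF xc] by (simp add: G.m_assoc)
      then show "v \<in> k2 G V <#>\<^bsub>G\<^esub> (\<psi> ` k2 G U)" using a b unfolding set_mult_def by blast
    qed
  next
    show "k2 G V <#>\<^bsub>G\<^esub> (\<psi> ` k2 G U) \<subseteq> k2 G (star_prod U V)"
    proof
      fix v assume "v \<in> k2 G V <#>\<^bsub>G\<^esub> (\<psi> ` k2 G U)"
      then obtain b x where b: "(\<one>\<^bsub>G\<^esub>, b) \<in> V" and x: "(\<one>\<^bsub>G\<^esub>, x) \<in> U"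
        and v: "v = b \<otimes>\<^bsub>G\<^esub> \<psi> x" unfolding set_mult_def by (auto simp: k2_def)
      have xc: "x \<in> carrier G" using cU[OF x] by blast
      have "(\<one>\<^bsub>G\<^esub> \<otimes>\<^bsub>G\<^esub> x, b \<otimes>\<^bsub>G\<^esub> \<psi> x) \<in> V" using mV[OF b DV[OF xc]] .
      then have xv: "(x, v) \<in> V" using v xc by simp
      show "v \<in> k2 G (star_prod U V)"
        unfolding k2_def star_prod_def p1_def p2_def using xv x oU by blast
    qed
  qed
  show ?thesis using i ii iii unfolding pi_def by blast
qed

end
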